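(* Fix $\lambda,\sigma>0$, let $\{\psi_p\}_{p\in\mathbb{R}^2\times S^1}$ be the Gabor family and $d(p,q)=\|\psi_p-\psi_q\|_{L^2}$. For $p_0=(x_0,y_0,\theta_0)$ let $$g(p_0)=2\sigma^2\pi\begin{pmatrix}\big(\frac{1}{4\sigma^2}+\frac{2\pi^2}{\lambda^2}\big)\cos^2\theta_0+\frac{1}{4\sigma^2}\sin^2\theta_0 & \frac{2\pi^2}{\lambda^2}\cos\theta_0\sin\theta_0 & 0\\ \frac{2\pi^2}{\lambda^2}\cos\theta_0\sin\theta_0 & \big(\frac{1}{4\sigma^2}+\frac{2\pi^2}{\lambda^2}\big)\sin^2\theta_0+\frac{1}{4\sigma^2}\cos^2\theta_0 & 0\\ 0&0&\frac{\sigma^2\pi^2}{\lambda^2}\end{pmatrix}.$$ Then, as $p=(x,y,\theta)\to p_0$ (with $\theta-\theta_0$ represented in $(-\pi,\pi]$), writing $\Delta=(x-x_0,y-y_0,\theta-\theta_0)$, $$d^2(p,p_0)=\Delta^{T}g(p_0)\Delta+o(|\Delta|^2).$$ Moreover $\det g(p_0)=8\sigma^6\pi^3\big(\frac{1}{4\sigma^2}+\frac{2\pi^2}{\lambda^2}\big)\frac{1}{4\sigma^2}\frac{\sigma^2\pi^2}{\lambda^2}$ is independent of $p_0$, so the Riemannian measure of $g$ is a constant multiple of Lebesgue measure on $\mathbb{R}^2\times S^1$.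
   Context: Gabor family: for $p=(x,y,\theta)\in\mathbb{R}^2\times S^1$, $\psi_p(u,v)=\psi_0(R_{-\theta}(u-x,v-y))$ with $\psi_0(u,v)=\exp(2\pi iu/\lambda)\exp(-\frac{u^2+v^2}{2\sigma^2})$, where $R_\alpha$ is the rotation of $\mathbb{R}^2$ by angle $\alpha$. *)

theory Defs
  imports "HOL-Analysis.Analysis"
begin

definition gabor0 :: "real \<Rightarrow> real \<Rightarrow> real \<times> real \<Rightarrow> complex" where
  "gabor0 lam sig uv = (case uv of (u, v) \<Rightarrow>
     cis (2 * pi * u / lam) * complex_of_real (exp (- (u\<^sup>2 + v\<^sup>2) / (2 * sig\<^sup>2))))"

definition rot :: "real \<Rightarrow> real \<times> real \<Rightarrow> real \<times> real" where
  "rot \<alpha> ab = (case ab of (a, b) \<Rightarrow> (cos \<alpha> * a - sin \<alpha> * b, sin \<alpha> * a + cos \<alpha> * b))"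

text \<open>Gabor family, indexed by p = (x, y, theta) written as a vector with
  p$1 = x, p$2 = y, p$3 = theta (theta a real representative of the angle in S^1):
  psi_p(u,v) = psi_0(R_{-theta}(u - x, v - y)).\<close>
definition gabor :: "real \<Rightarrow> real \<Rightarrow> real^3 \<Rightarrow> real \<times> real \<Rightarrow> complex" where
  "gabor lam sig p uv = (case uv of (u, v) \<Rightarrow>
     gabor0 lam sig (rot (- (p$3)) (u - p$1, v - p$2)))"

definition gabor_dist :: "real \<Rightarrow> real \<Rightarrow> real^3 \<Rightarrow> real^3 \<Rightarrow> real" where
  "gabor_dist lam sig p q =
     sqrt (integral\<^sup>L lborel (\<lambda>z::real \<times> real. (cmod (gabor lam sig p z - gabor lam sig q z))\<^sup>2))"

definition gabor_metric :: "real \<Rightarrow> real \<Rightarrow> real^3 \<Rightarrow> real^3^3" where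
  "gabor_metric lam sig p0 =
    (let t = p0$3; A = 1 / (4 * sig\<^sup>2); B = 2 * pi\<^sup>2 / lam\<^sup>2 in
     (2 * sig\<^sup>2 * pi) *\<^sub>R
       vector [vector [(A + B) * (cos t)\<^sup>2 + A * (sin t)\<^sup>2, B * cos t * sin t, 0],
               vector [B * cos t * sin t, (A + B) * (sin t)\<^sup>2 + A * (cos t)\<^sup>2, 0],
               vector [0, 0, sig\<^sup>2 * pi\<^sup>2 / lam\<^sup>2]])"

end

theory Submission
  imports Defs "HOL-Probability.Characteristic_Functions"
begin

lemma std_char:
  "has_bochner_integral lborel (\<lambda>x. std_normal_density x *\<^sub>R iexp (u * x)) (complex_of_real (exp (- (u^2) / 2)))"
proof -
  interpret P: prob_space std_normal_distribution by (rule prob_space_normal_density) simp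
  have i: "integrable std_normal_distribution (\<lambda>x. iexp (u * x))"
    by (rule P.integrable_iexp) auto
  have "integrable lborel (\<lambda>x. std_normal_density x *\<^sub>R iexp (u * x))"
    using i by (subst (asm) integrable_density) auto
  moreover have "integral\<^sup>L lborel (\<lambda>x. std_normal_density x *\<^sub>R iexp (u * x)) = char std_normal_distribution u"
    unfolding char_def by (subst integral_density) auto
  ultimately show ?thesis using char_std_normal_distribution
    by (simp add: has_bochner_integral_iff)
qed

lemma gauss1:
  fixes s c m :: real
  assumes s: "s > 0"
  shows "has_bochner_integral lborel (\<lambda>t. cis (c*t) * complex_of_real (exp (-((t-m)^2)/s^2)))
           (complex_of_real (sqrt pi * s * exp (-(c^2 * s^2)/4)) * cis (c*m))"
proof -
  define f where "f = (\<lambda>t. cis (c*t) * complex_of_real (exp (-((t-m)^2)/s^2)))"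
  define a where "a = s / sqrt 2"
  have a: "a \<noteq> 0" "a > 0" using s by (auto simp: a_def)
  have eq: "f (m + a * x) = (cis (c*m) * complex_of_real (sqrt (2*pi))) * (std_normal_density x *\<^sub>R iexp ((c*a) * x))" for x
  proof -
    have "(m + a*x - m)^2 / s^2 = x^2/2" using s by (simp add: a_def power_mult_distrib power_divide)
    moreover have "cis (c*(m + a*x)) = cis (c*m) * iexp ((c*a)*x)"
      by (simp add: cis_conv_exp exp_add[symmetric] algebra_simps)
    ultimately show ?thesis
      by (simp add: f_def std_normal_density_def scaleR_conv_of_real real_sqrt_mult)
  qed
  have hb: "has_bochner_integral lborel (\<lambda>x. f (m + a * x))
        ((cis (c*m) * complex_of_real (sqrt (2*pi))) * complex_of_real (exp (- ((c*a)^2) / 2)))"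
    unfolding eq by (intro has_bochner_integral_mult_right std_char)
  have int: "integrable lborel f"
    using hb lborel_integrable_real_affine_iff[OF a(1), of f m] by (simp add: has_bochner_integral_iff)
  have "integral\<^sup>L lborel f = a *\<^sub>R integral\<^sup>L lborel (\<lambda>x. f (m + a * x))"
    using lborel_integral_real_affine[OF a(1), of f m] a by simp
  also have "\<dots> = complex_of_real (sqrt pi * s * exp (-(c^2 * s^2)/4)) * cis (c*m)"
    using hb a s by (simp add: has_bochner_integral_iff a_def scaleR_conv_of_real real_sqrt_mult power_mult_distrib power_divide)
  finally show ?thesis using int unfolding f_def by (simp add: has_bochner_integral_iff)
qed

lemma prod2:
  fixes f g :: "real \<Rightarrow> complex"
  assumes hf: "has_bochner_integral lborel f I1" and hg: "has_bochner_integral lborel g I2"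
  shows "has_bochner_integral (lborel::(real\<times>real) measure) (\<lambda>z. f (fst z) * g (snd z)) (I1 * I2)"
proof -
  have fi: "integrable lborel f" and gi: "integrable lborel g"
    using hf hg by (auto simp: has_bochner_integral_iff)
  have [measurable]: "f \<in> borel_measurable lborel" "g \<in> borel_measurable lborel"
    using fi gi by auto
  have meas: "(\<lambda>z. f (fst z) * g (snd z)) \<in> borel_measurable (lborel \<Otimes>\<^sub>M lborel)"
    by measurable
  have int: "integrable (lborel \<Otimes>\<^sub>M lborel) (\<lambda>z. f (fst z) * g (snd z))"
  proof (rule lborel_pair.Fubini_integrable[OF meas])
    have "(\<lambda>x. \<integral>y. norm (f (fst (x, y)) * g (snd (x, y))) \<partial>lborel) = (\<lambda>x. norm (f x) * (\<integral>y. norm (g y) \<partial>lborel))"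
      by (simp add: norm_mult)
    then show "integrable lborel (\<lambda>x. \<integral>y. norm (f (fst (x, y)) * g (snd (x, y))) \<partial>lborel)"
      using fi by (simp add: integrable_mult_left)
    show "AE x in lborel. integrable lborel (\<lambda>y. f (fst (x, y)) * g (snd (x, y)))"
      using gi by simp
  qed
  have "integral\<^sup>L (lborel \<Otimes>\<^sub>M lborel) (\<lambda>z. f (fst z) * g (snd z)) = (\<integral>x. (\<integral>y. f x * g y \<partial>lborel) \<partial>lborel)"
    using lborel_pair.integral_fst'[OF int] by simp
  also have "\<dots> = I1 * I2" using hf hg by (simp add: has_bochner_integral_iff)
  finally show ?thesis using int by (simp add: has_bochner_integral_iff lborel_prod)
qed

lemma rot_sq: "(c * a + s * b)^2 + (- s * a + c * b)^2 = (c^2 + s^2) * (a^2 + b^2)" for c s a b :: real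
  by (simp add: power2_eq_square algebra_simps)

lemma gabor_expl:
  "gabor lam sig p (u, v) =
     cis ((2*pi/lam) * (cos (p$3) * (u - p$1) + sin (p$3) * (v - p$2))) *
     complex_of_real (exp (- ((u - p$1)^2 + (v - p$2)^2) / (2 * sig^2)))"
proof -
  have e: "(cos (p$3) * (u - p$1) + sin (p$3) * (v - p$2))^2 + (- sin (p$3) * (u - p$1) + cos (p$3) * (v - p$2))^2
        = (u - p$1)^2 + (v - p$2)^2"
    by (simp only: rot_sq sin_cos_squared_add2 mult_1)
  have "gabor lam sig p (u, v) = cis (2 * pi * (cos (p$3) * (u - p$1) + sin (p$3) * (v - p$2)) / lam) *
     complex_of_real (exp (- ((cos (p$3) * (u - p$1) + sin (p$3) * (v - p$2))^2 + (- sin (p$3) * (u - p$1) + cos (p$3) * (v - p$2))^2) / (2 * sig^2)))"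
    by (simp add: gabor_def gabor0_def rot_def)
  then show ?thesis by (simp only: e) (simp add: mult.assoc)
qed

lemma pointwise:
  fixes k s u v x1 y1 t1 x2 y2 t2 :: real
  assumes s: "s \<noteq> 0"
  shows "cis (k*(cos t1*(u-x1) + sin t1*(v-y1))) * complex_of_real (exp (-((u-x1)^2+(v-y1)^2)/(2* s^2))) *
         cnj (cis (k*(cos t2*(u-x2) + sin t2*(v-y2))) * complex_of_real (exp (-((u-x2)^2+(v-y2)^2)/(2* s^2))))
       = (cis (- k * (cos t1 * x1 + sin t1 * y1 - cos t2 * x2 - sin t2 * y2)) *
            complex_of_real (exp (-((x1-x2)^2+(y1-y2)^2)/(4* s^2)))) *
         ((cis ((k * (cos t1 - cos t2)) * u) * complex_of_real (exp (-((u - (x1+x2)/2)^2)/s^2))) *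
          (cis ((k * (sin t1 - sin t2)) * v) * complex_of_real (exp (-((v - (y1+y2)/2)^2)/s^2))))"
proof -
  have e1: "-((u-x1)^2+(v-y1)^2)/(2* s^2) + -((u-x2)^2+(v-y2)^2)/(2* s^2)
      = -((x1-x2)^2+(y1-y2)^2)/(4* s^2) + (-((u - (x1+x2)/2)^2)/s^2 + -((v - (y1+y2)/2)^2)/s^2)"
    using s by (simp add: field_simps power2_eq_square)
  have e2: "k*(cos t1*(u-x1) + sin t1*(v-y1)) - k*(cos t2*(u-x2) + sin t2*(v-y2))
      = - k * (cos t1 * x1 + sin t1 * y1 - cos t2 * x2 - sin t2 * y2) + ((k * (cos t1 - cos t2)) * u + (k * (sin t1 - sin t2)) * v)"
    by (simp add: algebra_simps)
  have "exp (-((u-x1)^2+(v-y1)^2)/(2* s^2)) * exp (-((u-x2)^2+(v-y2)^2)/(2* s^2))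
      = exp (-((x1-x2)^2+(y1-y2)^2)/(4* s^2)) * (exp (-((u - (x1+x2)/2)^2)/s^2) * exp (-((v - (y1+y2)/2)^2)/s^2))"
    by (simp only: exp_add[symmetric] e1)
  moreover have "cis (k*(cos t1*(u-x1) + sin t1*(v-y1))) * cnj (cis (k*(cos t2*(u-x2) + sin t2*(v-y2))))
      = cis (- k * (cos t1 * x1 + sin t1 * y1 - cos t2 * x2 - sin t2 * y2)) * (cis ((k * (cos t1 - cos t2)) * u) * cis ((k * (sin t1 - sin t2)) * v))"
    by (simp only: cis_cnj cis_mult) (rule arg_cong[where f=cis], simp add: algebra_simps)
  ultimately show ?thesis
    by (simp add: mult_ac flip: of_real_mult)
qed

lemma inner_int:
  fixes lam sig :: real and p q :: "real^3"
  assumes s: "sig > 0"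
  defines "k \<equiv> 2*pi/lam"
  shows "has_bochner_integral lborel (\<lambda>z. gabor lam sig p z * cnj (gabor lam sig q z))
     ((cis (- k * (cos (p$3) * p$1 + sin (p$3) * p$2 - cos (q$3) * q$1 - sin (q$3) * q$2)) *
            complex_of_real (exp (-((p$1-q$1)^2+(p$2-q$2)^2)/(4 * sig^2)))) *
      ((complex_of_real (sqrt pi * sig * exp (-((k * (cos (p$3) - cos (q$3)))^2 * sig^2)/4)) * cis ((k * (cos (p$3) - cos (q$3))) * ((p$1+q$1)/2))) *
       (complex_of_real (sqrt pi * sig * exp (-((k * (sin (p$3) - sin (q$3)))^2 * sig^2)/4)) * cis ((k * (sin (p$3) - sin (q$3))) * ((p$2+q$2)/2)))))"
proof -
  define R where "R = (\<lambda>u v. (cis (- k * (cos (p$3) * p$1 + sin (p$3) * p$2 - cos (q$3) * q$1 - sin (q$3) * q$2)) *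
            complex_of_real (exp (-((p$1-q$1)^2+(p$2-q$2)^2)/(4 * sig^2)))) *
         ((cis ((k * (cos (p$3) - cos (q$3))) * u) * complex_of_real (exp (-((u - (p$1+q$1)/2)^2)/sig^2))) *
          (cis ((k * (sin (p$3) - sin (q$3))) * v) * complex_of_real (exp (-((v - (p$2+q$2)/2)^2)/sig^2)))))"
  have pw: "gabor lam sig p (u,v) * cnj (gabor lam sig q (u,v)) = R u v" for u v
    unfolding R_def gabor_expl k_def[symmetric]
    by (rule pointwise) (use s in simp)
  have eq: "(\<lambda>z. gabor lam sig p z * cnj (gabor lam sig q z)) = (\<lambda>z. R (fst z) (snd z))"
    by (rule ext) (metis pw prod.collapse)
  show ?thesis unfolding eq R_def
    by (intro has_bochner_integral_mult_right prod2 gauss1 s)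
qed

definition Kc :: "real \<Rightarrow> real \<Rightarrow> real^3 \<Rightarrow> real^3 \<Rightarrow> complex" where
  "Kc lam sig p q = (let k = 2*pi/lam in
     (cis (- k * (cos (p$3) * p$1 + sin (p$3) * p$2 - cos (q$3) * q$1 - sin (q$3) * q$2)) *
            complex_of_real (exp (-((p$1-q$1)^2+(p$2-q$2)^2)/(4 * sig^2)))) *
      ((complex_of_real (sqrt pi * sig * exp (-((k * (cos (p$3) - cos (q$3)))^2 * sig^2)/4)) * cis ((k * (cos (p$3) - cos (q$3))) * ((p$1+q$1)/2))) *
       (complex_of_real (sqrt pi * sig * exp (-((k * (sin (p$3) - sin (q$3)))^2 * sig^2)/4)) * cis ((k * (sin (p$3) - sin (q$3))) * ((p$2+q$2)/2)))))"

lemma inner_int': "sig > 0 \<Longrightarrow> has_bochner_integral lborel (\<lambda>z. gabor lam sig p z * cnj (gabor lam sig q z)) (Kc lam sig p q)"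
  unfolding Kc_def Let_def by (rule inner_int)

lemma Kc_same: "sig > 0 \<Longrightarrow> Re (Kc lam sig p p) = pi * sig^2"
  by (simp add: Kc_def Let_def power2_eq_square)

lemma cmod_diff_sq: "(cmod (a - b))^2 = Re (a * cnj a) + Re (b * cnj b) - 2 * Re (a * cnj b)"
  by (simp only: cmod_power2) (simp add: power2_eq_square algebra_simps)

lemma dist_sq:
  assumes s: "sig > 0"
  shows "(gabor_dist lam sig p q)^2 = 2 * pi * sig^2 - 2 * Re (Kc lam sig p q)"
proof -
  have h: "has_bochner_integral lborel (\<lambda>z. (cmod (gabor lam sig p z - gabor lam sig q z))\<^sup>2)
       (Re (Kc lam sig p p) + Re (Kc lam sig q q) - 2 * Re (Kc lam sig p q))"
    unfolding cmod_diff_sq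
    by (intro has_bochner_integral_diff has_bochner_integral_add has_bochner_integral_mult_right
              has_bochner_integral_Re inner_int' s)
  have "integral\<^sup>L lborel (\<lambda>z. (cmod (gabor lam sig p z - gabor lam sig q z))\<^sup>2) = 2 * pi * sig^2 - 2 * Re (Kc lam sig p q)"
    using h Kc_same[OF s] by (simp add: has_bochner_integral_iff)
  moreover have "0 \<le> integral\<^sup>L lborel (\<lambda>z. (cmod (gabor lam sig p z - gabor lam sig q z))\<^sup>2)"
    by (rule integral_nonneg_AE) simp
  ultimately show ?thesis unfolding gabor_dist_def by simp
qed

lemma Kc_polar: "Kc lam sig p q = complex_of_real (pi * sig^2 * exp (-((p$1-q$1)^2+(p$2-q$2)^2)/(4 * sig^2))
        * exp (-(((2*pi/lam) * (cos (p$3) - cos (q$3)))^2 * sig^2)/4) * exp (-(((2*pi/lam) * (sin (p$3) - sin (q$3)))^2 * sig^2)/4))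
     * cis (- (2*pi/lam) * (cos (p$3) * p$1 + sin (p$3) * p$2 - cos (q$3) * q$1 - sin (q$3) * q$2)
            + ((2*pi/lam) * (cos (p$3) - cos (q$3))) * ((p$1+q$1)/2) + ((2*pi/lam) * (sin (p$3) - sin (q$3))) * ((p$2+q$2)/2))"
proof -
  have "complex_of_real (sqrt pi) * complex_of_real (sqrt pi) = complex_of_real pi" by (simp flip: of_real_mult)
  then show ?thesis
    unfolding Kc_def Let_def cis_mult[symmetric] of_real_mult
    by (simp only: mult_ac) (simp add: power2_eq_square \<open>complex_of_real (sqrt pi) * complex_of_real (sqrt pi) = complex_of_real pi\<close>)
qed

lemma l_e2: "- k * (cos a * (x + d1) + sin a * (y + d2) - cos b * x - sin b * y)
            + (k * (cos a - cos b)) * ((x + d1 + x)/2) + (k * (sin a - sin b)) * ((y + d2 + y)/2)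
          = - (k * ((cos a + cos b) * d1 + (sin a + sin b) * d2) / 2)" for k a b x y d1 d2 :: real
    by (simp add: field_simps)
lemma l_sq: "(k * (ca - cb))^2 * s^2 / 4 + (k * (sa - sb))^2 * s^2 / 4
          = s^2 * k^2 * (1 - c) / 2" if "(ca - cb)^2 + (sa - sb)^2 = 2 - 2 * c" for k ca cb sa sb c s :: real
proof -
  have "(k * (ca - cb))^2 * s^2 / 4 + (k * (sa - sb))^2 * s^2 / 4 = k^2 * s^2 * ((ca - cb)^2 + (sa - sb)^2) / 4"
    by (simp add: power2_eq_square field_simps)
  also have "\<dots> = k^2 * s^2 * (2 - 2 * c) / 4" by (simp only: that)
  also have "\<dots> = s^2 * k^2 * (1 - c) / 2" by (simp add: field_simps)
  finally show ?thesis .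
qed
lemma l_cs: "(ca - cb)^2 + (sa - sb)^2 = 2 - 2 * (ca * cb + sa * sb)"
  if "ca^2 + sa^2 = 1" "cb^2 + sb^2 = 1" for ca cb sa sb :: real
proof -
  have "(ca - cb)^2 + (sa - sb)^2 = (ca^2 + sa^2) + (cb^2 + sb^2) - 2 * (ca * cb + sa * sb)"
    by (simp add: power2_eq_square field_simps)
  then show ?thesis using that by simp
qed

lemma det_g: "det (gabor_metric lam sig p0) =
           8 * sig ^ 6 * pi ^ 3 * (1 / (4 * sig\<^sup>2) + 2 * pi\<^sup>2 / lam\<^sup>2) * (1 / (4 * sig\<^sup>2))
             * (sig\<^sup>2 * pi\<^sup>2 / lam\<^sup>2)"
proof -
  define A where "A = 1 / (4 * sig\<^sup>2)"
  define B where "B = 2 * pi\<^sup>2 / lam\<^sup>2"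
  define C where "C = sig\<^sup>2 * pi\<^sup>2 / lam\<^sup>2"
  define c where "c = cos (p0$3)"
  define s where "s = sin (p0$3)"
  have cs: "c^2 + s^2 = 1" by (simp add: c_def s_def)
  have "det (gabor_metric lam sig p0) = (2 * sig\<^sup>2 * pi)^3 * (((A + B) * c^2 + A * s^2) * ((A + B) * s^2 + A * c^2) - (B * c * s) * (B * c * s)) * C"
    unfolding gabor_metric_def Let_def A_def[symmetric] B_def[symmetric] C_def[symmetric] c_def[symmetric] s_def[symmetric]
    by (simp add: det_3 power3_eq_cube algebra_simps)
  also have "((A + B) * c^2 + A * s^2) * ((A + B) * s^2 + A * c^2) - (B * c * s) * (B * c * s) = A * (A + B) * (c^2 + s^2)^2"
    by (simp add: power2_eq_square algebra_simps)
  finally show ?thesis unfolding cs A_def B_def C_def by (simp add: power_mult_distrib algebra_simps)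
qed

lemma quad_g: "D \<bullet> (gabor_metric lam sig p0 *v D) = 2 * sig\<^sup>2 * pi *
   (1 / (4 * sig\<^sup>2) * ((D$1)^2 + (D$2)^2) + 2 * pi\<^sup>2 / lam\<^sup>2 * (cos (p0$3) * D$1 + sin (p0$3) * D$2)^2
    + sig\<^sup>2 * pi\<^sup>2 / lam\<^sup>2 * (D$3)^2)"
proof -
  define A where "A = 1 / (4 * sig\<^sup>2)"
  define B where "B = 2 * pi\<^sup>2 / lam\<^sup>2"
  define C where "C = sig\<^sup>2 * pi\<^sup>2 / lam\<^sup>2"
  define c where "c = cos (p0$3)"
  define s where "s = sin (p0$3)"
  have cs: "c^2 + s^2 = 1" by (simp add: c_def s_def)
  have "D \<bullet> (gabor_metric lam sig p0 *v D) = 2 * sig\<^sup>2 * pi *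
     (D$1 * (((A + B) * c^2 + A * s^2) * D$1 + B * c * s * D$2) + D$2 * (B * c * s * D$1 + ((A + B) * s^2 + A * c^2) * D$2)
      + D$3 * (C * D$3))"
    unfolding gabor_metric_def Let_def A_def[symmetric] B_def[symmetric] C_def[symmetric] c_def[symmetric] s_def[symmetric]
    by (simp add: inner_vec_def matrix_vector_mult_def sum_3 algebra_simps)
  also have "\<dots> = 2 * sig\<^sup>2 * pi * (A * (c^2 + s^2) * ((D$1)^2 + (D$2)^2) + B * (c * D$1 + s * D$2)^2 + C * (D$3)^2)"
    by (simp add: power2_eq_square algebra_simps)
  finally show ?thesis unfolding cs A_def B_def C_def c_def s_def by simp
qed

lemma cos_taylor3: "\<bar>1 - cos x - x^2/2\<bar> \<le> \<bar>x\<bar>^3 / 6" for x :: real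
proof -
  have "\<bar>Re (iexp x - (\<Sum>k \<le> 2. (\<i> * x)^k / fact k))\<bar> \<le> \<bar>x\<bar>^3 / 6"
    using abs_Re_le_cmod[of "iexp x - (\<Sum>k \<le> 2. (\<i> * x)^k / fact k)"] iexp_approx1[of x 2]
    by (simp add: numeral_3_eq_3)
  moreover have "Re (iexp x - (\<Sum>k \<le> 2. (\<i> * x)^k / fact k)) = cos x - 1 + x^2/2"
    by (simp add: numeral_2_eq_2 cis_conv_exp[symmetric] power2_eq_square)
  ultimately have "\<bar>cos x - 1 + x^2/2\<bar> \<le> \<bar>x\<bar>^3 / 6" by simp
  moreover have "\<bar>1 - cos x - x^2/2\<bar> = \<bar>cos x - 1 + x^2/2\<bar>" by linarith
  ultimately show ?thesis by simp
qed

lemma one_minus_cos_le: "1 - cos x \<le> x^2/2" for x :: real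
proof -
  have "cos x = 1 - 2 * sin (x/2) ^ 2" using cos_double_sin[of "x/2"] by simp
  moreover have "sin (x/2)^2 \<le> (x/2)^2"
    using abs_sin_x_le_abs_x[of "x/2"] by (metis power2_abs power_mono abs_ge_zero)
  ultimately show ?thesis by (simp add: power_divide)
qed

lemma one_minus_cos_ge: "0 \<le> 1 - cos x" for x :: real
  by simp

lemma cos_lip: "\<bar>cos a - cos b\<bar> \<le> \<bar>a - b\<bar>" for a b :: real
proof -
  have "\<bar>cos a - cos b\<bar> = 2 * \<bar>sin ((a + b) / 2)\<bar> * \<bar>sin ((b - a) / 2)\<bar>"
    by (simp add: cos_diff_cos abs_mult)
  also have "\<dots> \<le> 2 * 1 * \<bar>(b - a) / 2\<bar>"
    by (intro mult_mono abs_sin_x_le_abs_x) auto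
  finally show ?thesis by simp
qed

lemma sin_lip: "\<bar>sin a - sin b\<bar> \<le> \<bar>a - b\<bar>" for a b :: real
proof -
  have "\<bar>sin a - sin b\<bar> = 2 * \<bar>sin ((a - b) / 2)\<bar> * \<bar>cos ((a + b) / 2)\<bar>"
    by (simp add: sin_diff_sin abs_mult)
  also have "\<dots> \<le> 2 * \<bar>(a - b) / 2\<bar> * 1"
    by (intro mult_mono abs_sin_x_le_abs_x) auto
  finally show ?thesis by simp
qed

lemma exp_taylor2: "0 \<le> q \<Longrightarrow> \<bar>1 - exp (-q) - q\<bar> \<le> q^2/2" for q :: real
proof -
  assume q: "0 \<le> q"
  have lo: "1 - q \<le> exp (-q)" using exp_ge_add_one_self[of "-q"] by simp
  have e: "1 + q + q^2/2 \<le> exp q" using exp_lower_Taylor_quadratic[OF q] .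
  have "exp (-q) * (1 + q + q^2/2) \<le> exp (-q) * exp q" using e by (intro mult_left_mono) auto
  then have h: "exp (-q) * (1 + q + q^2/2) \<le> 1" by (simp add: exp_minus field_simps)
  have "exp (-q) \<le> 1 - q + q^2/2"
  proof -
    have pos: "0 < 1 + q + q^2/2" using q by (simp add: add_pos_nonneg)
    have "(1 - q + q^2/2) * (1 + q + q^2/2) = 1 + q^4/4"
      by (simp add: power2_eq_square power4_eq_xxxx algebra_simps)
    then have "1 \<le> (1 - q + q^2/2) * (1 + q + q^2/2)" by simp
    with h have "exp (-q) * (1 + q + q^2/2) \<le> (1 - q + q^2/2) * (1 + q + q^2/2)" by linarith
    with pos show ?thesis by simp
  qed
  with lo show ?thesis by (simp add: abs_le_iff)
qed

lemma d2_formula: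
  fixes p0 D :: "real^3" and lam sig :: real
  assumes s: "sig > 0"
  defines "k \<equiv> 2*pi/lam"
  shows "(gabor_dist lam sig (p0 + D) p0)^2 =
     2 * pi * sig^2 * (1 - exp (- ((D$1^2 + D$2^2) / (4 * sig^2) + sig^2 * k^2 * (1 - cos (D$3)) / 2))
        * cos (k * ((cos (p0$3 + D$3) + cos (p0$3)) * D$1 + (sin (p0$3 + D$3) + sin (p0$3)) * D$2) / 2))"
proof -
  define a where "a = p0$3 + D$3"
  define b where "b = p0$3"
  have ab: "cos (D$3) = cos a * cos b + sin a * sin b"
    unfolding a_def b_def using cos_diff[of "p0$3 + D$3" "p0$3"] by simp
  have cs: "(cos a - cos b)^2 + (sin a - sin b)^2 = 2 - 2 * cos (D$3)"
    unfolding ab by (rule l_cs) simp_all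
  have e1: "-((p0$1 + D$1 - p0$1)^2+(p0$2 + D$2 - p0$2)^2)/(4 * sig^2) + - ((k * (cos a - cos b))^2 * sig^2)/4
         + - ((k * (sin a - sin b))^2 * sig^2)/4
       = - ((D$1^2 + D$2^2) / (4 * sig^2) + sig^2 * k^2 * (1 - cos (D$3)) / 2)"
  proof -
    have "- ((k * (cos a - cos b))^2 * sig^2)/4 + - ((k * (sin a - sin b))^2 * sig^2)/4
        = - ((k * (cos a - cos b))^2 * sig^2/4 + (k * (sin a - sin b))^2 * sig^2/4)" by simp
    also have "\<dots> = - (sig^2 * k^2 * (1 - cos (D$3)) / 2)" by (simp only: l_sq[OF cs])
    finally have "- ((k * (cos a - cos b))^2 * sig^2)/4 + - ((k * (sin a - sin b))^2 * sig^2)/4 = - (sig^2 * k^2 * (1 - cos (D$3)) / 2)" .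
    moreover have "-((p0$1 + D$1 - p0$1)^2+(p0$2 + D$2 - p0$2)^2)/(4 * sig^2) = - ((D$1^2 + D$2^2) / (4 * sig^2))"
      by (simp add: diff_divide_distrib add_divide_distrib)
    ultimately show ?thesis by (simp only: add.assoc)
  qed
  have ex: "exp (-((p0$1 + D$1 - p0$1)^2+(p0$2 + D$2 - p0$2)^2)/(4 * sig^2)) * (exp (- ((k * (cos a - cos b))^2 * sig^2)/4)
         * (exp (- ((k * (sin a - sin b))^2 * sig^2)/4) * z))
       = exp (- ((D$1^2 + D$2^2) / (4 * sig^2) + sig^2 * k^2 * (1 - cos (D$3)) / 2)) * z" for z
    by (simp only: mult.assoc[symmetric] exp_add[symmetric] add.assoc[symmetric] e1)
  show ?thesis
    unfolding dist_sq[OF s] Kc_polar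
    apply (simp only: times_complex.sel Im_complex_of_real Re_complex_of_real cis.sel mult_zero_left diff_0_right vector_add_component
                     k_def[symmetric] a_def[symmetric])
    apply (simp only: b_def[symmetric])
    apply (simp only: l_e2 cos_minus)
    apply (simp only: mult.assoc ex)
    apply (simp add: algebra_simps)
    done
qed

lemma abs_mult_le: "\<bar>a\<bar> \<le> A \<Longrightarrow> \<bar>b\<bar> \<le> B \<Longrightarrow> \<bar>a * b\<bar> \<le> A * B" for a b A B :: real
  unfolding abs_mult by (rule mult_mono') auto

lemma main_bound:
  fixes x y z t k sig r :: real
  assumes s: "sig > 0" and r2: "x^2 + y^2 + z^2 = r^2" and r0: "0 \<le> r" and r1: "r \<le> 1"
  defines "Q \<equiv> (x^2 + y^2) / (4 * sig^2) + sig^2 * k^2 * (1 - cos z) / 2"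
    and "L \<equiv> k * ((cos (t + z) + cos t) * x + (sin (t + z) + sin t) * y) / 2"
    and "Mq \<equiv> 1 / (4 * sig^2) + sig^2 * k^2 / 4"
  shows "\<bar>(1 - exp (-Q) * cos L) - ((x^2 + y^2) / (4 * sig^2) + sig^2 * k^2 * z^2 / 4 + (k * (cos t * x + sin t * y))^2 / 2)\<bar>
      \<le> (Mq^2 / 2 + 2 * Mq * k^2 + 4/3 * \<bar>k\<bar>^3 + sig^2 * k^2 / 12 + 2 * k^2) * r^3"
proof -
  define L1 where "L1 = k * (cos t * x + sin t * y)"
  define Q2 where "Q2 = (x^2 + y^2) / (4 * sig^2) + sig^2 * k^2 * z^2 / 4"
  have sq: "a^2 \<le> r^2 \<Longrightarrow> \<bar>a\<bar> \<le> r" for a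
    using r0 by (metis abs_le_square_iff abs_of_nonneg)
  have xr: "\<bar>x\<bar> \<le> r" and yr: "\<bar>y\<bar> \<le> r" and zr: "\<bar>z\<bar> \<le> r"
    using r2 by (auto intro!: sq) (smt (verit) zero_le_power2)+
  have xy: "x^2 + y^2 \<le> r^2" using r2 by (smt (verit) zero_le_power2)
  have z2: "z^2 \<le> r^2" using r2 by (smt (verit) zero_le_power2)
  have r3: "r^3 \<le> r^2" "r^4 \<le> r^3" using r0 r1 by (simp_all add: power_decreasing)
  have sg: "0 < sig^2" using s by simp
  have Mq0: "0 \<le> Mq" unfolding Mq_def using sg by simp
  have cz: "0 \<le> 1 - cos z" "1 - cos z \<le> z^2/2" using one_minus_cos_le[of z] by simp_all
  have Q0: "0 \<le> Q" unfolding Q_def using sg cz by (simp add: add_nonneg_nonneg)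
  have Qb: "Q \<le> Mq * r^2"
  proof -
    have "(x^2 + y^2) / (4 * sig^2) \<le> r^2 / (4 * sig^2)" using xy sg by (simp add: divide_right_mono)
    moreover have "sig^2 * k^2 * (1 - cos z) / 2 \<le> sig^2 * k^2 * (r^2/2) / 2"
      using cz z2 by (intro divide_right_mono mult_left_mono) auto
    ultimately have "Q \<le> r^2 / (4 * sig^2) + sig^2 * k^2 * (r^2/2) / 2" unfolding Q_def by linarith
    also have "\<dots> = Mq * r^2" unfolding Mq_def using sg by (simp add: field_simps)
    finally show ?thesis .
  qed
  have Q2b: "Q^2 \<le> Mq^2 * r^3"
  proof -
    have "Q^2 \<le> (Mq * r^2)^2" using Qb Q0 by (rule power_mono)
    also have "\<dots> = Mq^2 * r^4" by (simp add: power_mult_distrib flip: power_mult)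
    also have "\<dots> \<le> Mq^2 * r^3" using r3 by (intro mult_left_mono) auto
    finally show ?thesis .
  qed
  have Lb: "\<bar>L\<bar> \<le> 2 * \<bar>k\<bar> * r"
  proof -
    have "\<bar>(cos (t + z) + cos t) * x\<bar> \<le> 2 * r"
      by (rule abs_mult_le[OF _ xr]) (smt (verit) abs_cos_le_one)
    moreover have "\<bar>(sin (t + z) + sin t) * y\<bar> \<le> 2 * r"
      by (rule abs_mult_le[OF _ yr]) (smt (verit) abs_sin_le_one)
    ultimately have "\<bar>(cos (t + z) + cos t) * x + (sin (t + z) + sin t) * y\<bar> \<le> 4 * r" by linarith
    then have "\<bar>k * ((cos (t + z) + cos t) * x + (sin (t + z) + sin t) * y)\<bar> \<le> \<bar>k\<bar> * (4 * r)"
      by (intro abs_mult_le) auto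
    then show ?thesis unfolding L_def by simp
  qed
  have L2b: "L^2 \<le> 4 * k^2 * r^2"
  proof -
    have "L^2 = \<bar>L\<bar>^2" by simp
    also have "\<dots> \<le> (2 * \<bar>k\<bar> * r)^2" using Lb by (intro power_mono) auto
    finally show ?thesis by (simp add: power_mult_distrib)
  qed
  have L1b: "\<bar>L1\<bar> \<le> 2 * \<bar>k\<bar> * r"
  proof -
    have "\<bar>cos t * x\<bar> \<le> 1 * r" by (rule abs_mult_le[OF _ xr]) simp
    moreover have "\<bar>sin t * y\<bar> \<le> 1 * r" by (rule abs_mult_le[OF _ yr]) simp
    ultimately have "\<bar>cos t * x + sin t * y\<bar> \<le> 2 * r" by linarith
    then have "\<bar>k * (cos t * x + sin t * y)\<bar> \<le> \<bar>k\<bar> * (2 * r)" by (intro abs_mult_le) auto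
    then show ?thesis unfolding L1_def by simp
  qed
  have LL1: "\<bar>L - L1\<bar> \<le> \<bar>k\<bar> * r^2"
  proof -
    have "L - L1 = k * ((cos (t + z) - cos t) * x + (sin (t + z) - sin t) * y) / 2"
      unfolding L_def L1_def by (simp add: algebra_simps)
    moreover have "\<bar>(cos (t + z) - cos t) * x\<bar> \<le> r * r"
      by (rule abs_mult_le[OF _ xr]) (use cos_lip[of "t+z" t] zr in simp)
    moreover have "\<bar>(sin (t + z) - sin t) * y\<bar> \<le> r * r"
      by (rule abs_mult_le[OF _ yr]) (use sin_lip[of "t+z" t] zr in simp)
    ultimately have "\<bar>(cos (t + z) - cos t) * x + (sin (t + z) - sin t) * y\<bar> \<le> 2 * (r * r)"
      and e: "L - L1 = k * ((cos (t + z) - cos t) * x + (sin (t + z) - sin t) * y) / 2" by linarith+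
    then have "\<bar>k * ((cos (t + z) - cos t) * x + (sin (t + z) - sin t) * y)\<bar> \<le> \<bar>k\<bar> * (2 * (r * r))"
      by (intro abs_mult_le) auto
    then show ?thesis unfolding e by (simp add: power2_eq_square)
  qed
  have dL: "\<bar>(L^2 - L1^2) / 2\<bar> \<le> 2 * k^2 * r^3"
  proof -
    have "\<bar>L^2 - L1^2\<bar> = \<bar>L - L1\<bar> * \<bar>L + L1\<bar>" by (simp add: power2_eq_square algebra_simps flip: abs_mult)
    also have "\<dots> \<le> (\<bar>k\<bar> * r^2) * (4 * \<bar>k\<bar> * r)"
      using LL1 Lb L1b by (intro mult_mono) auto
    also have "\<dots> = 4 * \<bar>k\<bar>^2 * r^3" by (simp add: power2_eq_square power3_eq_cube algebra_simps)
    also have "\<dots> = 4 * k^2 * r^3" by simp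
    finally show ?thesis by simp
  qed
  have dQ: "\<bar>Q - Q2\<bar> \<le> sig^2 * k^2 / 12 * r^3"
  proof -
    have "Q - Q2 = sig^2 * k^2 / 2 * (1 - cos z - z^2/2)" unfolding Q_def Q2_def by (simp add: field_simps)
    then have X: "\<bar>Q - Q2\<bar> = \<bar>sig^2 * k^2 / 2\<bar> * \<bar>1 - cos z - z^2/2\<bar>" by (simp only: abs_mult)
    have Y: "\<bar>sig^2 * k^2 / 2\<bar> = sig^2 * k^2 / 2" by simp
    from X have "\<bar>Q - Q2\<bar> = sig^2 * k^2 / 2 * \<bar>1 - cos z - z^2/2\<bar>" by (simp only: Y)
    also have "\<dots> \<le> sig^2 * k^2 / 2 * (\<bar>z\<bar>^3 / 6)" by (intro mult_left_mono cos_taylor3) auto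
    also have "\<dots> \<le> sig^2 * k^2 / 2 * (r^3 / 6)"
      using zr by (intro mult_left_mono divide_right_mono power_mono) auto
    finally show ?thesis by simp
  qed
  have dE: "\<bar>1 - exp (-Q) - Q\<bar> \<le> Mq^2 / 2 * r^3" using exp_taylor2[OF Q0] Q2b by simp
  have dC: "\<bar>exp (-Q) * (1 - cos L) - L^2/2\<bar> \<le> 2 * Mq * k^2 * r^3 + 4/3 * \<bar>k\<bar>^3 * r^3"
  proof -
    have e1: "\<bar>exp (-Q) - 1\<bar> \<le> Q" using exp_ge_add_one_self[of "-Q"] Q0 by (simp add: abs_le_iff)
    have cL: "0 \<le> 1 - cos L" "1 - cos L \<le> L^2/2" using one_minus_cos_le[of L] by simp_all
    have "\<bar>(exp (-Q) - 1) * (1 - cos L)\<bar> \<le> (Mq * r^2) * (4 * k^2 * r^2 / 2)"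
      using e1 Qb cL L2b by (intro abs_mult_le) auto
    also have "\<dots> = 2 * Mq * k^2 * r^4" by (simp add: power2_eq_square power4_eq_xxxx)
    also have "\<dots> \<le> 2 * Mq * k^2 * r^3" using r3 Mq0 by (intro mult_left_mono) auto
    finally have A: "\<bar>(exp (-Q) - 1) * (1 - cos L)\<bar> \<le> 2 * Mq * k^2 * r^3" .
    have "\<bar>1 - cos L - L^2/2\<bar> \<le> \<bar>L\<bar>^3 / 6" by (rule cos_taylor3)
    also have "\<dots> \<le> (2 * \<bar>k\<bar> * r)^3 / 6" using Lb by (intro divide_right_mono power_mono) auto
    also have "\<dots> = 4/3 * \<bar>k\<bar>^3 * r^3" by (simp add: power_mult_distrib)
    finally have B: "\<bar>1 - cos L - L^2/2\<bar> \<le> 4/3 * \<bar>k\<bar>^3 * r^3" .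
    have "exp (-Q) * (1 - cos L) - L^2/2 = (exp (-Q) - 1) * (1 - cos L) + (1 - cos L - L^2/2)"
      by (simp add: algebra_simps)
    then show ?thesis using A B by linarith
  qed
  have split: "(1 - exp (-Q) * cos L) - (Q2 + L1^2 / 2)
      = (1 - exp (-Q) - Q) + (exp (-Q) * (1 - cos L) - L^2/2) + (Q - Q2) + (L^2 - L1^2) / 2"
    by (simp add: field_simps)
  have "\<bar>(1 - exp (-Q) * cos L) - (Q2 + L1^2 / 2)\<bar>
      \<le> Mq^2 / 2 * r^3 + (2 * Mq * k^2 * r^3 + 4/3 * \<bar>k\<bar>^3 * r^3) + sig^2 * k^2 / 12 * r^3 + 2 * k^2 * r^3"
    unfolding split using dE dC dQ dL by linarith
  then show ?thesis unfolding Q2_def L1_def by (simp add: algebra_simps)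
qed

theorem mainTheorem5:
  fixes lam sig :: real and p0 :: "real^3"
  assumes "lam > 0" and "sig > 0"
  shows "((\<lambda>D::real^3.
            ((gabor_dist lam sig (p0 + D) p0)\<^sup>2 - D \<bullet> (gabor_metric lam sig p0 *v D)) / (norm D)\<^sup>2)
          \<longlongrightarrow> 0) (at 0) \<and>
         det (gabor_metric lam sig p0) =
           8 * sig ^ 6 * pi ^ 3 * (1 / (4 * sig\<^sup>2) + 2 * pi\<^sup>2 / lam\<^sup>2) * (1 / (4 * sig\<^sup>2))
             * (sig\<^sup>2 * pi\<^sup>2 / lam\<^sup>2)"
proof
  show "det (gabor_metric lam sig p0) =
           8 * sig ^ 6 * pi ^ 3 * (1 / (4 * sig\<^sup>2) + 2 * pi\<^sup>2 / lam\<^sup>2) * (1 / (4 * sig\<^sup>2))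
             * (sig\<^sup>2 * pi\<^sup>2 / lam\<^sup>2)" by (rule det_g)
next
  have lam: "lam > 0" and s: "sig > 0" using assms by auto
  define k where "k = 2 * pi / lam"
  define Mq where "Mq = 1 / (4 * sig^2) + sig^2 * k^2 / 4"
  define K where "K = 2 * pi * sig^2 * (Mq^2 / 2 + 2 * Mq * k^2 + 4/3 * \<bar>k\<bar>^3 + sig^2 * k^2 / 12 + 2 * k^2)"
  define F where "F = (\<lambda>D::real^3. ((gabor_dist lam sig (p0 + D) p0)\<^sup>2 - D \<bullet> (gabor_metric lam sig p0 *v D)))"
  have nrm: "(norm D)^2 = (D$1)^2 + (D$2)^2 + (D$3)^2" for D :: "real^3"
  proof -
    have "(norm D)^2 = D \<bullet> D" by (rule power2_norm_eq_inner)
    also have "\<dots> = (D$1)^2 + (D$2)^2 + (D$3)^2" by (simp add: inner_vec_def sum_3 power2_eq_square)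
    finally show ?thesis .
  qed
  have bound: "\<bar>F D\<bar> \<le> K * (norm D)^3" if "norm D \<le> 1" for D :: "real^3"
  proof -
    have eqF: "F D = 2 * pi * sig^2 * ((1 - exp (- ((D$1^2 + D$2^2) / (4 * sig^2) + sig^2 * k^2 * (1 - cos (D$3)) / 2))
        * cos (k * ((cos (p0$3 + D$3) + cos (p0$3)) * D$1 + (sin (p0$3 + D$3) + sin (p0$3)) * D$2) / 2))
        - ((D$1^2 + D$2^2) / (4 * sig^2) + sig^2 * k^2 * (D$3)^2 / 4 + (k * (cos (p0$3) * D$1 + sin (p0$3) * D$2))^2 / 2))"
      unfolding F_def d2_formula[OF s] quad_g k_def using lam s
      by (simp add: power_divide power_mult_distrib field_simps) (simp add: power2_eq_square algebra_simps)
    have "\<bar>F D\<bar> = 2 * pi * sig^2 * \<bar>(1 - exp (- ((D$1^2 + D$2^2) / (4 * sig^2) + sig^2 * k^2 * (1 - cos (D$3)) / 2))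
        * cos (k * ((cos (p0$3 + D$3) + cos (p0$3)) * D$1 + (sin (p0$3 + D$3) + sin (p0$3)) * D$2) / 2))
        - ((D$1^2 + D$2^2) / (4 * sig^2) + sig^2 * k^2 * (D$3)^2 / 4 + (k * (cos (p0$3) * D$1 + sin (p0$3) * D$2))^2 / 2)\<bar>"
      unfolding eqF abs_mult by simp
    also have "\<dots> \<le> 2 * pi * sig^2 * ((Mq^2 / 2 + 2 * Mq * k^2 + 4/3 * \<bar>k\<bar>^3 + sig^2 * k^2 / 12 + 2 * k^2) * (norm D)^3)"
      unfolding Mq_def
      by (intro mult_left_mono main_bound s) (use that nrm[of D] in auto)
    finally show ?thesis unfolding K_def by (simp add: mult.assoc)
  qed
  have pt: "norm (F D / (norm D)^2) \<le> K * norm D" if "D \<noteq> 0" "dist D 0 < 1" for D :: "real^3"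
  proof -
    have D0: "norm D > 0" and D1: "norm D \<le> 1" using that by auto
    have "norm (F D / (norm D)^2) = \<bar>F D\<bar> / (norm D)^2" by (simp add: abs_div)
    also have "\<dots> \<le> K * (norm D)^3 / (norm D)^2" using bound[OF D1] D0 by (intro divide_right_mono) auto
    also have "\<dots> = K * norm D" using D0 by (simp add: power2_eq_square power3_eq_cube)
    finally show ?thesis .
  qed
  have ev: "eventually (\<lambda>D. norm (F D / (norm D)^2) \<le> K * norm D) (at (0::real^3))"
    unfolding eventually_at
  proof (rule exI[of _ 1], intro conjI ballI impI)
    fix D :: "real^3" assume "D \<noteq> 0 \<and> dist D 0 < 1"
    then show "norm (F D / (norm D)^2) \<le> K * norm D" using pt by blast
  qed simp
  have lim: "((\<lambda>D::real^3. K * norm D) \<longlongrightarrow> 0) (at 0)"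
  proof -
    have "((\<lambda>D::real^3. K * norm D) \<longlongrightarrow> K * norm (0::real^3)) (at 0)" by (intro tendsto_intros)
    then show ?thesis by simp
  qed
  show "((\<lambda>D::real^3.
            ((gabor_dist lam sig (p0 + D) p0)\<^sup>2 - D \<bullet> (gabor_metric lam sig p0 *v D)) / (norm D)\<^sup>2)
          \<longlongrightarrow> 0) (at 0)"
    using Lim_null_comparison[OF ev lim] unfolding F_def .
qed

end
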